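(* Let $A$, $B$ be lattices that satisfy Whitman's condition (W) and that are each generated by a set of join prime elements and also generated by a set of meet prime elements. Let $D$ be a lattice and $g\colon A\to D$, $h\colon B\to D$ lattice epimorphisms. If the fiber product $\{(a,b)\in A\times B: g(a)=h(b)\}$ is a finitely generated sublattice of $A\times B$, then $g$ and $h$ are bounded.
   Context: Whitman's condition (W) for a lattice: for all finite subsets $S,T$, if $\bigwedge S\le\bigvee T$ then there is $s\in S$ with $s\le\bigvee T$ or there is $t\in T$ with $\bigwedge S\le t$. An element $p$ is join prime if $p\le x\vee y$ implies $p\le x$ or $p\le y$; meet prime dually. A lattice homomorphism $g\colon A\to D$ is lower bounded if for every $d\in D$ the set $\{x\in A: g(x)\ge d\}$ is empty or has a least element; upper bounded if for every $d$ the set $\{x\in A: g(x)\le d\}$ is empty or has a greatest element; bounded if both. *)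

theory Defs
  imports Main "HOL-Library.Product_Order"
begin

text \<open>Whitman's condition (W), for finite nonempty subsets (meets/joins of
finite nonempty sets exist in any lattice).\<close>
definition whitman :: "'a::lattice itself \<Rightarrow> bool" where
  "whitman _ \<longleftrightarrow>
     (\<forall>S T :: 'a set. finite S \<and> S \<noteq> {} \<and> finite T \<and> T \<noteq> {} \<and> Inf_fin S \<le> Sup_fin T \<longrightarrow>
        (\<exists>s\<in>S. s \<le> Sup_fin T) \<or> (\<exists>t\<in>T. Inf_fin S \<le> t))"

definition join_prime :: "'a::lattice \<Rightarrow> bool" where
  "join_prime p \<longleftrightarrow> (\<forall>x y. p \<le> sup x y \<longrightarrow> p \<le> x \<or> p \<le> y)"

definition meet_prime :: "'a::lattice \<Rightarrow> bool" where
  "meet_prime p \<longleftrightarrow> (\<forall>x y. inf x y \<le> p \<longrightarrow> x \<le> p \<or> y \<le> p)"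

inductive_set lat_gen :: "'a::lattice set \<Rightarrow> 'a set" for X where
  base: "x \<in> X \<Longrightarrow> x \<in> lat_gen X"
| sup: "x \<in> lat_gen X \<Longrightarrow> y \<in> lat_gen X \<Longrightarrow> sup x y \<in> lat_gen X"
| inf: "x \<in> lat_gen X \<Longrightarrow> y \<in> lat_gen X \<Longrightarrow> inf x y \<in> lat_gen X"

definition is_sublattice :: "'a::lattice set \<Rightarrow> bool" where
  "is_sublattice S \<longleftrightarrow> (\<forall>x\<in>S. \<forall>y\<in>S. sup x y \<in> S \<and> inf x y \<in> S)"

definition lattice_hom :: "('a::lattice \<Rightarrow> 'b::lattice) \<Rightarrow> bool" where
  "lattice_hom f \<longleftrightarrow> (\<forall>x y. f (sup x y) = sup (f x) (f y) \<and> f (inf x y) = inf (f x) (f y))"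

definition lower_bounded :: "('a::lattice \<Rightarrow> 'b::lattice) \<Rightarrow> bool" where
  "lower_bounded f \<longleftrightarrow> (\<forall>d. {x. d \<le> f x} = {} \<or> (\<exists>m. m \<in> {x. d \<le> f x} \<and> (\<forall>x\<in>{x. d \<le> f x}. m \<le> x)))"

definition upper_bounded :: "('a::lattice \<Rightarrow> 'b::lattice) \<Rightarrow> bool" where
  "upper_bounded f \<longleftrightarrow> (\<forall>d. {x. f x \<le> d} = {} \<or> (\<exists>m. m \<in> {x. f x \<le> d} \<and> (\<forall>x\<in>{x. f x \<le> d}. x \<le> m)))"

definition bounded_hom :: "('a::lattice \<Rightarrow> 'b::lattice) \<Rightarrow> bool" where
  "bounded_hom f \<longleftrightarrow> lower_bounded f \<and> upper_bounded f"

end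

theory Submission
  imports Defs
begin

lemma hom_mono: "lattice_hom f \<Longrightarrow> x \<le> y \<Longrightarrow> f x \<le> f y"
  unfolding lattice_hom_def by (metis sup.absorb_iff2 sup.orderI)

lemma Inf_fin_closed:
  assumes "finite S" "S \<noteq> {}" "\<forall>y\<in>S. P y" "\<And>x y. P x \<Longrightarrow> P y \<Longrightarrow> P (inf x y)"
  shows "P (Inf_fin S)"
  using assms(1,2,3)
proof (induction S rule: finite_ne_induct)
  case (singleton x) then show ?case by simp
next
  case (insert x F) then show ?case by (simp add: assms(4))
qed

lemma Sup_fin_closed:
  assumes "finite S" "S \<noteq> {}" "\<forall>y\<in>S. P y" "\<And>x y. P x \<Longrightarrow> P y \<Longrightarrow> P (sup x y)"
  shows "P (Sup_fin S)"
  using assms(1,2,3)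
proof (induction S rule: finite_ne_induct)
  case (singleton x) then show ?case by simp
next
  case (insert x F) then show ?case by (simp add: assms(4))
qed

lemma lower_core:
  fixes g :: "'a::lattice \<Rightarrow> 'd::lattice" and h :: "'b::lattice \<Rightarrow> 'd"
    and Q :: "'b set" and X :: "('a \<times> 'b) set"
  assumes W: "whitman TYPE('b)"
    and QJ: "\<forall>p\<in>Q. join_prime p" and QG: "lat_gen Q = UNIV"
    and g: "lattice_hom g" "surj g" and h: "lattice_hom h" "surj h"
    and X: "finite X" "lat_gen X = {(a, b). g a = h b}"
  shows "lower_bounded g"
proof -
  have Wb: "\<And>S T :: 'b set. finite S \<Longrightarrow> S \<noteq> {} \<Longrightarrow> finite T \<Longrightarrow> T \<noteq> {} \<Longrightarrow> Inf_fin S \<le> Sup_fin T \<Longrightarrow>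
        (\<exists>s\<in>S. s \<le> Sup_fin T) \<or> (\<exists>t\<in>T. Inf_fin S \<le> t)"
    using W unfolding whitman_def by blast
  have inF: "\<And>t. t \<in> lat_gen X \<Longrightarrow> g (fst t) = h (snd t)" using X(2) by auto
  have red: "\<exists>t\<in>lat_gen X. fst t = a \<and> b \<le> snd t" if "h b \<le> g a" for a b
  proof -
    obtain c where c: "h c = g a" using h(2) by (metis surjD)
    have "h (sup b c) = g a" using h(1) that c unfolding lattice_hom_def by (simp add: sup.absorb2)
    then have "(a, sup b c) \<in> lat_gen X" using X(2) by simp
    then show ?thesis by force
  qed
  have red2: "h b \<le> g (fst t)" if "t \<in> lat_gen X" "b \<le> snd t" for t b
    using inF[OF that(1)] hom_mono[OF h(1) that(2)] by simp
  have main: "\<exists>m. h b \<le> g m \<and> (\<forall>a. h b \<le> g a \<longrightarrow> m \<le> a)" if "b \<in> lat_gen Q" for b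
    using that
  proof (induction b rule: lat_gen.induct)
    case (base q)
    have jp: "join_prime q" using QJ base by blast
    define C where "C = fst ` {x\<in>X. q \<le> snd x}"
    have fC: "finite C" using X(1) unfolding C_def by simp
    have ne1: "\<exists>x\<in>X. q \<le> snd x" if "t \<in> lat_gen X" "q \<le> snd t" for t
      using that
    proof (induction t rule: lat_gen.induct)
      case (base x) then show ?case by blast
    next
      case (sup x y) then show ?case using jp unfolding join_prime_def by auto
    next
      case (inf x y) then show ?case by auto
    qed
    obtain a0 where "g a0 = h q" using g(2) by (metis surjD)
    then have "(a0, q) \<in> lat_gen X" using X(2) by simp
    then have "C \<noteq> {}" using ne1[of "(a0,q)"] unfolding C_def by force
    have lb: "Inf_fin C \<le> fst t" if "t \<in> lat_gen X" "q \<le> snd t" for t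
      using that
    proof (induction t rule: lat_gen.induct)
      case (base x) then show ?case using fC unfolding C_def by (auto intro: Inf_fin.coboundedI)
    next
      case (sup x y)
      then have "q \<le> snd x \<or> q \<le> snd y" using jp unfolding join_prime_def by auto
      then show ?case using sup by (auto intro: le_supI1 le_supI2)
    next
      case (inf x y) then show ?case by auto
    qed
    have mem: "h q \<le> g (Inf_fin C)"
    proof (rule Inf_fin_closed[OF fC \<open>C \<noteq> {}\<close>])
      show "\<forall>y\<in>C. h q \<le> g y" unfolding C_def
        using red2[OF lat_gen.base] by fastforce
    next
      fix x y assume "h q \<le> g x" "h q \<le> g y"
      then show "h q \<le> g (inf x y)" using g(1) unfolding lattice_hom_def by simp
    qed
    show ?case
    proof (intro exI conjI allI impI)
      show "h q \<le> g (Inf_fin C)" by (rule mem)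
      fix a assume "h q \<le> g a"
      then obtain t where "t \<in> lat_gen X" "fst t = a" "q \<le> snd t" using red by blast
      then show "Inf_fin C \<le> a" using lb by blast
    qed
  next
    case (sup b1 b2)
    then obtain m1 m2 where m1: "h b1 \<le> g m1" "\<forall>a. h b1 \<le> g a \<longrightarrow> m1 \<le> a"
      and m2: "h b2 \<le> g m2" "\<forall>a. h b2 \<le> g a \<longrightarrow> m2 \<le> a" by blast
    show ?case
      apply (rule exI[of _ "sup m1 m2"])
      using m1 m2 g(1) h(1) unfolding lattice_hom_def
      by (auto intro: le_supI1 le_supI2)
  next
    case (inf b1 b2)
    then obtain m1 m2 where m1: "h b1 \<le> g m1" "\<forall>a. h b1 \<le> g a \<longrightarrow> m1 \<le> a"
      and m2: "h b2 \<le> g m2" "\<forall>a. h b2 \<le> g a \<longrightarrow> m2 \<le> a" by blast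
    define b where "b = inf b1 b2"
    define C where "C = {m1, m2} \<union> fst ` {x\<in>X. b \<le> snd x}"
    have fC: "finite C" using X(1) unfolding C_def by simp
    have neC: "C \<noteq> {}" unfolding C_def by simp
    have hb: "h b = inf (h b1) (h b2)" using h(1) unfolding b_def lattice_hom_def by simp
    have lb: "Inf_fin C \<le> fst t" if "t \<in> lat_gen X" "b \<le> snd t" for t
      using that
    proof (induction t rule: lat_gen.induct)
      case (base x)
      then have "fst x \<in> C" unfolding C_def by auto
      then show ?case by (rule Inf_fin.coboundedI[OF fC])
    next
      case (sup x y)
      have xy: "sup x y \<in> lat_gen X" using sup.hyps by (rule lat_gen.sup)
      have ww: "Inf_fin {b1, b2} \<le> Sup_fin {snd x, snd y}" using sup.prems unfolding b_def by simp
      have "(\<exists>s\<in>{b1,b2}. s \<le> Sup_fin {snd x, snd y}) \<or> (\<exists>t\<in>{snd x, snd y}. Inf_fin {b1,b2} \<le> t)"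
        by (rule Wb[OF _ _ _ _ ww]) simp_all
      then have cs: "b1 \<le> snd (sup x y) \<or> b2 \<le> snd (sup x y) \<or> b \<le> snd x \<or> b \<le> snd y"
        unfolding b_def by simp
      have c1: "Inf_fin C \<le> m1" "Inf_fin C \<le> m2"
        by (rule Inf_fin.coboundedI[OF fC], simp add: C_def)+
      show ?case
      proof -
        { assume "b1 \<le> snd (sup x y)"
          then have "h b1 \<le> g (fst (sup x y))" using red2 xy by blast
          then have "m1 \<le> fst (sup x y)" using m1(2) by blast
          then have ?thesis using c1(1) by (rule order_trans[rotated]) }
        moreover
        { assume "b2 \<le> snd (sup x y)"
          then have "h b2 \<le> g (fst (sup x y))" using red2 xy by blast
          then have "m2 \<le> fst (sup x y)" using m2(2) by blast
          then have ?thesis using c1(2) by (rule order_trans[rotated]) }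
        moreover
        { assume "b \<le> snd x" then have ?thesis using sup.IH(1) by (auto intro: le_supI1) }
        moreover
        { assume "b \<le> snd y" then have ?thesis using sup.IH(2) by (auto intro: le_supI2) }
        ultimately show ?thesis using cs by blast
      qed
    next
      case (inf x y) then show ?case by auto
    qed
    have mem: "h b \<le> g (Inf_fin C)"
    proof (rule Inf_fin_closed[OF fC neC])
      have "h b \<le> g m1" "h b \<le> g m2" using m1 m2 hb by (auto intro: le_infI1 le_infI2)
      moreover have "\<forall>y\<in>fst ` {x\<in>X. b \<le> snd x}. h b \<le> g y"
        using red2[OF lat_gen.base] by fastforce
      ultimately show "\<forall>y\<in>C. h b \<le> g y" unfolding C_def by auto
    next
      fix x y assume "h b \<le> g x" "h b \<le> g y"
      then show "h b \<le> g (inf x y)" using g(1) unfolding lattice_hom_def by simp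
    qed
    show ?case unfolding b_def[symmetric]
    proof (intro exI conjI allI impI)
      show "h b \<le> g (Inf_fin C)" by (rule mem)
      fix a assume "h b \<le> g a"
      then obtain t where "t \<in> lat_gen X" "fst t = a" "b \<le> snd t" using red by blast
      then show "Inf_fin C \<le> a" using lb by blast
    qed
  qed
  show ?thesis unfolding lower_bounded_def
  proof
    fix d
    obtain b where "d = h b" using h(2) by (metis surjD)
    then obtain m where "d \<le> g m" "\<forall>a. d \<le> g a \<longrightarrow> m \<le> a" using main QG by blast
    then show "{x. d \<le> g x} = {} \<or> (\<exists>m. m \<in> {x. d \<le> g x} \<and> (\<forall>x\<in>{x. d \<le> g x}. m \<le> x))"
      by blast
  qed
qed

lemma upper_core:
  fixes g :: "'a::lattice \<Rightarrow> 'd::lattice" and h :: "'b::lattice \<Rightarrow> 'd"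
    and Q :: "'b set" and X :: "('a \<times> 'b) set"
  assumes W: "whitman TYPE('b)"
    and QJ: "\<forall>p\<in>Q. meet_prime p" and QG: "lat_gen Q = UNIV"
    and g: "lattice_hom g" "surj g" and h: "lattice_hom h" "surj h"
    and X: "finite X" "lat_gen X = {(a, b). g a = h b}"
  shows "upper_bounded g"
proof -
  have Wb: "\<And>S T :: 'b set. finite S \<Longrightarrow> S \<noteq> {} \<Longrightarrow> finite T \<Longrightarrow> T \<noteq> {} \<Longrightarrow> Inf_fin S \<le> Sup_fin T \<Longrightarrow>
        (\<exists>s\<in>S. s \<le> Sup_fin T) \<or> (\<exists>t\<in>T. Inf_fin S \<le> t)"
    using W unfolding whitman_def by blast
  have inF: "\<And>t. t \<in> lat_gen X \<Longrightarrow> g (fst t) = h (snd t)" using X(2) by auto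
  have red: "\<exists>t\<in>lat_gen X. fst t = a \<and> snd t \<le> b" if "g a \<le> h b" for a b
  proof -
    obtain c where c: "h c = g a" using h(2) by (metis surjD)
    have "h (inf b c) = g a" using h(1) that c unfolding lattice_hom_def by (simp add: inf.absorb2)
    then have "(a, inf b c) \<in> lat_gen X" using X(2) by simp
    then show ?thesis by force
  qed
  have red2: "g (fst t) \<le> h b" if "t \<in> lat_gen X" "snd t \<le> b" for t b
    using inF[OF that(1)] hom_mono[OF h(1) that(2)] by simp
  have main: "\<exists>m. g m \<le> h b \<and> (\<forall>a. g a \<le> h b \<longrightarrow> a \<le> m)" if "b \<in> lat_gen Q" for b
    using that
  proof (induction b rule: lat_gen.induct)
    case (base q)
    have jp: "meet_prime q" using QJ base by blast
    define C where "C = fst ` {x\<in>X. snd x \<le> q}"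
    have fC: "finite C" using X(1) unfolding C_def by simp
    have ne1: "\<exists>x\<in>X. snd x \<le> q" if "t \<in> lat_gen X" "snd t \<le> q" for t
      using that
    proof (induction t rule: lat_gen.induct)
      case (base x) then show ?case by blast
    next
      case (inf x y) then show ?case using jp unfolding meet_prime_def by auto
    next
      case (sup x y) then show ?case by auto
    qed
    obtain a0 where "g a0 = h q" using g(2) by (metis surjD)
    then have "(a0, q) \<in> lat_gen X" using X(2) by simp
    then have "C \<noteq> {}" using ne1[of "(a0,q)"] unfolding C_def by force
    have lb: "fst t \<le> Sup_fin C" if "t \<in> lat_gen X" "snd t \<le> q" for t
      using that
    proof (induction t rule: lat_gen.induct)
      case (base x)
      then have "fst x \<in> C" unfolding C_def by auto
      then show ?case by (rule Sup_fin.coboundedI[OF fC])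
    next
      case (inf x y)
      then have "snd x \<le> q \<or> snd y \<le> q" using jp unfolding meet_prime_def by auto
      then show ?case using inf by (auto intro: le_infI1 le_infI2)
    next
      case (sup x y) then show ?case by auto
    qed
    have mem: "g (Sup_fin C) \<le> h q"
    proof (rule Sup_fin_closed[OF fC \<open>C \<noteq> {}\<close>])
      show "\<forall>y\<in>C. g y \<le> h q" unfolding C_def
        using red2[OF lat_gen.base] by fastforce
    next
      fix x y assume "g x \<le> h q" "g y \<le> h q"
      then show "g (sup x y) \<le> h q" using g(1) unfolding lattice_hom_def by simp
    qed
    show ?case
    proof (intro exI conjI allI impI)
      show "g (Sup_fin C) \<le> h q" by (rule mem)
      fix a assume "g a \<le> h q"
      then obtain t where "t \<in> lat_gen X" "fst t = a" "snd t \<le> q" using red by blast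
      then show "a \<le> Sup_fin C" using lb by blast
    qed
  next
    case (inf b1 b2)
    then obtain m1 m2 where m1: "g m1 \<le> h b1" "\<forall>a. g a \<le> h b1 \<longrightarrow> a \<le> m1"
      and m2: "g m2 \<le> h b2" "\<forall>a. g a \<le> h b2 \<longrightarrow> a \<le> m2" by blast
    show ?case
      apply (rule exI[of _ "inf m1 m2"])
      using m1 m2 g(1) h(1) unfolding lattice_hom_def
      by (auto intro: le_infI1 le_infI2)
  next
    case (sup b1 b2)
    then obtain m1 m2 where m1: "g m1 \<le> h b1" "\<forall>a. g a \<le> h b1 \<longrightarrow> a \<le> m1"
      and m2: "g m2 \<le> h b2" "\<forall>a. g a \<le> h b2 \<longrightarrow> a \<le> m2" by blast
    define b where "b = sup b1 b2"
    define C where "C = {m1, m2} \<union> fst ` {x\<in>X. snd x \<le> b}"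
    have fC: "finite C" using X(1) unfolding C_def by simp
    have neC: "C \<noteq> {}" unfolding C_def by simp
    have hb: "h b = sup (h b1) (h b2)" using h(1) unfolding b_def lattice_hom_def by simp
    have lb: "fst t \<le> Sup_fin C" if "t \<in> lat_gen X" "snd t \<le> b" for t
      using that
    proof (induction t rule: lat_gen.induct)
      case (base x)
      then have "fst x \<in> C" unfolding C_def by auto
      then show ?case by (rule Sup_fin.coboundedI[OF fC])
    next
      case (inf x y)
      have xy: "inf x y \<in> lat_gen X" using inf.hyps by (rule lat_gen.inf)
      have ww: "Inf_fin {snd x, snd y} \<le> Sup_fin {b1, b2}" using inf.prems unfolding b_def by simp
      have "(\<exists>s\<in>{snd x, snd y}. s \<le> Sup_fin {b1, b2}) \<or> (\<exists>t\<in>{b1, b2}. Inf_fin {snd x, snd y} \<le> t)"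
        by (rule Wb[OF _ _ _ _ ww]) simp_all
      then have cs: "snd (inf x y) \<le> b1 \<or> snd (inf x y) \<le> b2 \<or> snd x \<le> b \<or> snd y \<le> b"
        unfolding b_def by auto
      have c1: "m1 \<le> Sup_fin C" "m2 \<le> Sup_fin C"
        by (rule Sup_fin.coboundedI[OF fC], simp add: C_def)+
      show ?case
      proof -
        { assume "snd (inf x y) \<le> b1"
          then have "g (fst (inf x y)) \<le> h b1" using red2 xy by blast
          then have "fst (inf x y) \<le> m1" using m1(2) by blast
          then have ?thesis using c1(1) by (rule order_trans) }
        moreover
        { assume "snd (inf x y) \<le> b2"
          then have "g (fst (inf x y)) \<le> h b2" using red2 xy by blast
          then have "fst (inf x y) \<le> m2" using m2(2) by blast
          then have ?thesis using c1(2) by (rule order_trans) }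
        moreover
        { assume "snd x \<le> b" then have ?thesis using inf.IH(1) by (auto intro: le_infI1) }
        moreover
        { assume "snd y \<le> b" then have ?thesis using inf.IH(2) by (auto intro: le_infI2) }
        ultimately show ?thesis using cs by blast
      qed
    next
      case (sup x y) then show ?case by auto
    qed
    have mem: "g (Sup_fin C) \<le> h b"
    proof (rule Sup_fin_closed[OF fC neC])
      have "g m1 \<le> h b" "g m2 \<le> h b" using m1 m2 hb by (auto intro: le_supI1 le_supI2)
      moreover have "\<forall>y\<in>fst ` {x\<in>X. snd x \<le> b}. g y \<le> h b"
        using red2[OF lat_gen.base] by fastforce
      ultimately show "\<forall>y\<in>C. g y \<le> h b" unfolding C_def by auto
    next
      fix x y assume "g x \<le> h b" "g y \<le> h b"
      then show "g (sup x y) \<le> h b" using g(1) unfolding lattice_hom_def by simp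
    qed
    show ?case unfolding b_def[symmetric]
    proof (intro exI conjI allI impI)
      show "g (Sup_fin C) \<le> h b" by (rule mem)
      fix a assume "g a \<le> h b"
      then obtain t where "t \<in> lat_gen X" "fst t = a" "snd t \<le> b" using red by blast
      then show "a \<le> Sup_fin C" using lb by blast
    qed
  qed
  show ?thesis unfolding upper_bounded_def
  proof
    fix d
    obtain b where "d = h b" using h(2) by (metis surjD)
    then obtain m where "g m \<le> d" "\<forall>a. g a \<le> d \<longrightarrow> a \<le> m" using main QG by blast
    then show "{x. g x \<le> d} = {} \<or> (\<exists>m. m \<in> {x. g x \<le> d} \<and> (\<forall>x\<in>{x. g x \<le> d}. x \<le> m))"
      by blast
  qed
qed

lemma lat_gen_swap: "lat_gen (prod.swap ` X) = prod.swap ` lat_gen X"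
proof
  show "lat_gen (prod.swap ` X) \<subseteq> prod.swap ` lat_gen X"
  proof
    fix t assume "t \<in> lat_gen (prod.swap ` X)"
    then show "t \<in> prod.swap ` lat_gen X"
    proof (induction t rule: lat_gen.induct)
      case (base x) then show ?case by (auto intro: lat_gen.base)
    next
      case (sup x y)
      then obtain x' y' where "x = prod.swap x'" "y = prod.swap y'" "x' \<in> lat_gen X" "y' \<in> lat_gen X" by blast
      then show ?case by (intro image_eqI[of _ _ "sup x' y'"]) (auto simp: prod.swap_def intro: lat_gen.sup)
    next
      case (inf x y)
      then obtain x' y' where "x = prod.swap x'" "y = prod.swap y'" "x' \<in> lat_gen X" "y' \<in> lat_gen X" by blast
      then show ?case by (intro image_eqI[of _ _ "inf x' y'"]) (auto simp: prod.swap_def intro: lat_gen.inf)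
    qed
  qed
next
  show "prod.swap ` lat_gen X \<subseteq> lat_gen (prod.swap ` X)"
  proof
    fix t assume "t \<in> prod.swap ` lat_gen X"
    then obtain t' where t: "t = prod.swap t'" "t' \<in> lat_gen X" by blast
    from t(2) have "prod.swap t' \<in> lat_gen (prod.swap ` X)"
    proof (induction t' rule: lat_gen.induct)
      case (base x) then show ?case by (auto intro: lat_gen.base)
    next
      case (sup x y)
      then show ?case using lat_gen.sup[OF sup.IH] by (simp add: prod.swap_def)
    next
      case (inf x y)
      then show ?case using lat_gen.inf[OF inf.IH] by (simp add: prod.swap_def)
    qed
    then show "t \<in> lat_gen (prod.swap ` X)" using t by simp
  qed
qed

theorem mainTheorem4:
  fixes g :: "'a::lattice \<Rightarrow> 'd::lattice" and h :: "'b::lattice \<Rightarrow> 'd"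
  assumes WA: "whitman TYPE('a)" and WB: "whitman TYPE('b)"
    and JA: "\<exists>P::'a set. (\<forall>p\<in>P. join_prime p) \<and> lat_gen P = UNIV"
    and MA: "\<exists>P::'a set. (\<forall>p\<in>P. meet_prime p) \<and> lat_gen P = UNIV"
    and JB: "\<exists>P::'b set. (\<forall>p\<in>P. join_prime p) \<and> lat_gen P = UNIV"
    and MB: "\<exists>P::'b set. (\<forall>p\<in>P. meet_prime p) \<and> lat_gen P = UNIV"
    and g: "lattice_hom g" "surj g"
    and h: "lattice_hom h" "surj h"
    and fg: "\<exists>X. finite X \<and> X \<subseteq> {(a, b). g a = h b} \<and> lat_gen X = {(a, b). g a = h b}"
  shows "bounded_hom g \<and> bounded_hom h"
proof -
  obtain X where X: "finite X" "lat_gen X = {(a, b). g a = h b}" using fg by blast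
  have X': "finite (prod.swap ` X)" "lat_gen (prod.swap ` X) = {(b, a). h b = g a}"
    using X by (auto simp: lat_gen_swap image_iff)
  obtain P1 where P1: "\<forall>p\<in>P1. join_prime p" "lat_gen P1 = (UNIV :: 'a set)" using JA by blast
  obtain P2 where P2: "\<forall>p\<in>P2. meet_prime p" "lat_gen P2 = (UNIV :: 'a set)" using MA by blast
  obtain Q1 where Q1: "\<forall>p\<in>Q1. join_prime p" "lat_gen Q1 = (UNIV :: 'b set)" using JB by blast
  obtain Q2 where Q2: "\<forall>p\<in>Q2. meet_prime p" "lat_gen Q2 = (UNIV :: 'b set)" using MB by blast
  have "lower_bounded g" by (rule lower_core[OF WB Q1 g h X])
  moreover have "upper_bounded g" by (rule upper_core[OF WB Q2 g h X])
  moreover have "lower_bounded h" by (rule lower_core[OF WA P1 h g X'])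
  moreover have "upper_bounded h" by (rule upper_core[OF WA P2 h g X'])
  ultimately show ?thesis unfolding bounded_hom_def by blast
qed

end
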